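(* Fix $M>0$. Then $$\alpha(M):=\inf_{T,u,v}\ \mathbb{P}\big(\tau_{u,+}^{X^{(T_{u,v},u)}}=\infty\big)>0,$$ where the infimum is over all trees $T$ which are $M$-bounded subdivisions of a tree with minimum degree at least $3$, and over all pairs of adjacent vertices $u\sim v$ in $T$.
   Context: A subdivision of a graph replaces each edge by a path of finite length; it is $M$-bounded if each such path has length at most $M$. For adjacent vertices $u\sim v$ of a tree $T$, $T_{u,v}$ is the connected component of $u$ in $T$ after removing $v$. $X^{(G,u)}$ denotes simple random walk on the (unweighted, undirected) graph $G$ started at $u$, and $\tau^{X^{(G,u)}}_{u,+}$ is its first return time to $u$ (first time $t\ge1$ at which it is at $u$). *)

theory Defs
  imports Complex_Main
begin

definition graph :: "'a set \<Rightarrow> ('a \<Rightarrow> 'a \<Rightarrow> bool) \<Rightarrow> bool" where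
  "graph V E \<longleftrightarrow> (\<forall>x y. E x y \<longrightarrow> x \<in> V \<and> y \<in> V \<and> E y x \<and> x \<noteq> y)"

definition connected_graph :: "'a set \<Rightarrow> ('a \<Rightarrow> 'a \<Rightarrow> bool) \<Rightarrow> bool" where
  "connected_graph V E \<longleftrightarrow> (\<forall>x\<in>V. \<forall>y\<in>V. E\<^sup>*\<^sup>* x y)"

definition has_cycle :: "'a set \<Rightarrow> ('a \<Rightarrow> 'a \<Rightarrow> bool) \<Rightarrow> bool" where
  "has_cycle V E \<longleftrightarrow> (\<exists>xs. 3 \<le> length xs \<and> distinct xs \<and> set xs \<subseteq> V \<and>
      (\<forall>i. Suc i < length xs \<longrightarrow> E (xs ! i) (xs ! Suc i)) \<and> E (last xs) (hd xs))"

definition is_tree :: "'a set \<Rightarrow> ('a \<Rightarrow> 'a \<Rightarrow> bool) \<Rightarrow> bool" where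
  "is_tree V E \<longleftrightarrow> graph V E \<and> V \<noteq> {} \<and> connected_graph V E \<and> \<not> has_cycle V E"

definition locally_finite :: "'a set \<Rightarrow> ('a \<Rightarrow> 'a \<Rightarrow> bool) \<Rightarrow> bool" where
  "locally_finite V E \<longleftrightarrow> (\<forall>x\<in>V. finite {y. E x y})"

definition min_degree_ge3 :: "'a set \<Rightarrow> ('a \<Rightarrow> 'a \<Rightarrow> bool) \<Rightarrow> bool" where
  "min_degree_ge3 V E \<longleftrightarrow> (\<forall>x\<in>V. infinite {y. E x y} \<or> 3 \<le> card {y. E x y})"

text \<open>(VT,ET) is an M-bounded subdivision of (VS,ES): up to the identification \<phi> of
the vertices of S with the branch vertices of T, each edge {a,b} of S is replaced by a
path p a b from \<phi> a to \<phi> b of length (number of edges) between 1 and M, internally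
disjoint from the branch vertices and from the other paths, and T consists exactly of
these paths.\<close>
definition bounded_subdivision ::
  "real \<Rightarrow> 'a set \<Rightarrow> ('a \<Rightarrow> 'a \<Rightarrow> bool) \<Rightarrow> 'b set \<Rightarrow> ('b \<Rightarrow> 'b \<Rightarrow> bool) \<Rightarrow> bool" where
  "bounded_subdivision M VT ET VS ES \<longleftrightarrow>
    (\<exists>(\<phi>::'b \<Rightarrow> 'a) (p::'b \<Rightarrow> 'b \<Rightarrow> 'a list).
      inj_on \<phi> VS \<and> \<phi> ` VS \<subseteq> VT \<and>
      (\<forall>a b. ES a b \<longrightarrow>
         2 \<le> length (p a b) \<and> real (length (p a b) - 1) \<le> M \<and>
         hd (p a b) = \<phi> a \<and> last (p a b) = \<phi> b \<and> distinct (p a b) \<and>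
         p b a = rev (p a b) \<and> set (p a b) \<subseteq> VT \<and>
         (\<forall>i. Suc i < length (p a b) \<longrightarrow> ET (p a b ! i) (p a b ! Suc i)) \<and>
         set (p a b) \<inter> \<phi> ` VS = {\<phi> a, \<phi> b}) \<and>
      (\<forall>a b c d. ES a b \<and> ES c d \<and> {a, b} \<noteq> {c, d} \<longrightarrow>
         set (p a b) \<inter> set (p c d) \<subseteq> \<phi> ` VS) \<and>
      VT = \<phi> ` VS \<union> \<Union> {set (p a b) | a b. ES a b} \<and>
      (\<forall>x y. ET x y \<longleftrightarrow>
         (\<exists>a b i. ES a b \<and> Suc i < length (p a b) \<and> x = p a b ! i \<and> y = p a b ! Suc i)))"

text \<open>T_{u,v}: the component of u in T after removing v, as an induced subgraph.\<close>
definition branch_vertices :: "'a set \<Rightarrow> ('a \<Rightarrow> 'a \<Rightarrow> bool) \<Rightarrow> 'a \<Rightarrow> 'a \<Rightarrow> 'a set" where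
  "branch_vertices V E u v = {w \<in> V - {v}. (\<lambda>x y. E x y \<and> x \<noteq> v \<and> y \<noteq> v)\<^sup>*\<^sup>* u w}"

definition branch_edges :: "'a set \<Rightarrow> ('a \<Rightarrow> 'a \<Rightarrow> bool) \<Rightarrow> 'a \<Rightarrow> 'a \<Rightarrow> 'a \<Rightarrow> 'a \<Rightarrow> bool" where
  "branch_edges V E u v x y \<longleftrightarrow>
     E x y \<and> x \<in> branch_vertices V E u v \<and> y \<in> branch_vertices V E u v"

text \<open>The law of
(X_0,...,X_n) for the walk started at u gives the path xs (with xs!0 = u and consecutive
entries adjacent) probability prod_{i<n} 1/deg(xs!i).\<close>
definition degree :: "('a \<Rightarrow> 'a \<Rightarrow> bool) \<Rightarrow> 'a \<Rightarrow> nat" where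
  "degree E x = card {y. E x y}"

definition walk_weight :: "('a \<Rightarrow> 'a \<Rightarrow> bool) \<Rightarrow> 'a list \<Rightarrow> real" where
  "walk_weight E xs = (\<Prod>i < length xs - 1. 1 / real (degree E (xs ! i)))"

text \<open>Walks (X_0,...,X_n) with X_0 = u and X_t \<noteq> u for 1 \<le> t \<le> n, i.e. the event
{tau_{u,+} > n}.\<close>
definition avoiding_walks :: "('a \<Rightarrow> 'a \<Rightarrow> bool) \<Rightarrow> 'a \<Rightarrow> nat \<Rightarrow> 'a list set" where
  "avoiding_walks E u n = {xs. length xs = Suc n \<and> xs ! 0 = u \<and>
      (\<forall>i<n. E (xs ! i) (xs ! Suc i)) \<and> (\<forall>i. 1 \<le> i \<and> i \<le> n \<longrightarrow> xs ! i \<noteq> u)}"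

definition prob_no_return_by :: "('a \<Rightarrow> 'a \<Rightarrow> bool) \<Rightarrow> 'a \<Rightarrow> nat \<Rightarrow> real" where
  "prob_no_return_by E u n = (\<Sum>xs \<in> avoiding_walks E u n. walk_weight E xs)"

text \<open>P(tau_{u,+} = \<infinity>) = lim_n P(tau_{u,+} > n) = inf_n P(tau_{u,+} > n)
(continuity from above; the sequence is non-increasing).\<close>
definition escape_prob :: "('a \<Rightarrow> 'a \<Rightarrow> bool) \<Rightarrow> 'a \<Rightarrow> real" where
  "escape_prob E u = (INF n. prob_no_return_by E u n)"

end

theory Submission
  imports Defs
begin


definition AW :: "('a \<Rightarrow> 'a \<Rightarrow> bool) \<Rightarrow> 'a \<Rightarrow> 'a \<Rightarrow> nat \<Rightarrow> 'a list set" where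
  "AW E u x n = {xs. length xs = Suc n \<and> xs ! 0 = x \<and>
      (\<forall>i<n. E (xs ! i) (xs ! Suc i)) \<and> (\<forall>i. 1 \<le> i \<and> i \<le> n \<longrightarrow> xs ! i \<noteq> u)}"

lemma AW_0: "AW E u x 0 = {[x]}"
  unfolding AW_def
  by (auto simp: length_Suc_conv)

lemma AW_Suc: "AW E u x (Suc n) = (\<lambda>ys. x # ys) ` (\<Union>y\<in>{y. E x y \<and> y \<noteq> u}. AW E u y n)"
proof (intro set_eqI iffI)
  fix xs assume "xs \<in> AW E u x (Suc n)"
  then obtain ys where xs: "xs = x # ys" and l: "length ys = Suc n"
    and e: "\<forall>i<Suc n. E (xs ! i) (xs ! Suc i)" and a: "\<forall>i. 1 \<le> i \<and> i \<le> Suc n \<longrightarrow> xs ! i \<noteq> u"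
    unfolding AW_def by (cases xs) auto
  have "ys \<in> AW E u (ys ! 0) n"
  proof -
    have "\<forall>i<n. E (ys ! i) (ys ! Suc i)"
    proof (intro allI impI)
      fix i assume "i < n"
      then have "E (xs ! Suc i) (xs ! Suc (Suc i))" using e by auto
      then show "E (ys ! i) (ys ! Suc i)" using xs by simp
    qed
    moreover have "\<forall>i. 1 \<le> i \<and> i \<le> n \<longrightarrow> ys ! i \<noteq> u"
    proof (intro allI impI)
      fix i assume "1 \<le> i \<and> i \<le> n"
      then have "xs ! Suc i \<noteq> u" using a by auto
      then show "ys ! i \<noteq> u" using xs by simp
    qed
    ultimately show ?thesis unfolding AW_def using l by auto
  qed
  moreover have "E x (ys ! 0)" using e xs by force
  moreover have "ys ! 0 \<noteq> u" using a xs by force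
  ultimately show "xs \<in> (\<lambda>ys. x # ys) ` (\<Union>y\<in>{y. E x y \<and> y \<noteq> u}. AW E u y n)"
    using xs by blast
next
  fix xs assume "xs \<in> (\<lambda>ys. x # ys) ` (\<Union>y\<in>{y. E x y \<and> y \<noteq> u}. AW E u y n)"
  then obtain y ys where xs: "xs = x # ys" and y: "E x y" "y \<noteq> u" and ys: "ys \<in> AW E u y n" by blast
  show "xs \<in> AW E u x (Suc n)"
    unfolding AW_def using ys y xs
    apply (auto simp: AW_def)
    subgoal for i by (cases i) auto
    subgoal for i apply (cases i) apply auto
      subgoal for k by (cases k) auto
      done
    done
qed

lemma AW_finite:
  assumes "\<And>x. finite {y. E x y}"
  shows "finite (AW E u x n)"
proof (induction n arbitrary: x)
  case 0 then show ?case by (simp add: AW_0)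
next
  case (Suc n)
  have "finite {y. E x y \<and> y \<noteq> u}" using assms[of x] by (rule rev_finite_subset) auto
  then show ?case unfolding AW_Suc using Suc by auto
qed

lemma walk_weight_Cons:
  assumes "ys \<noteq> []"
  shows "walk_weight E (x # ys) = 1 / real (degree E x) * walk_weight E ys"
proof -
  obtain m where m: "length ys = Suc m" using assms by (cases ys) auto
  show ?thesis
    unfolding walk_weight_def using m
    by (simp add: prod.lessThan_Suc_shift del: prod.lessThan_Suc)
qed

lemma walk_weight_nonneg: "0 \<le> walk_weight E xs"
  unfolding walk_weight_def by (auto intro: prod_nonneg)

lemma AW_sum_Suc:
  assumes fin: "\<And>x. finite {y. E x y}"
  shows "sum (walk_weight E) (AW E u x (Suc n)) =
     (\<Sum>y\<in>{y. E x y} - {u}. sum (walk_weight E) (AW E u y n)) / real (degree E x)"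
proof -
  have f1: "finite ({y. E x y} - {u})" using fin[of x] by auto
  have eq: "{y. E x y \<and> y \<noteq> u} = {y. E x y} - {u}" by auto
  have "sum (walk_weight E) (AW E u x (Suc n))
      = sum (walk_weight E \<circ> (\<lambda>ys. x # ys)) (\<Union>y\<in>{y. E x y} - {u}. AW E u y n)"
    unfolding AW_Suc eq by (rule sum.reindex) (auto simp: inj_on_def)
  also have "\<dots> = (\<Sum>y\<in>{y. E x y} - {u}. sum (walk_weight E \<circ> (\<lambda>ys. x # ys)) (AW E u y n))"
    apply (rule sum.UNION_disjoint)
    using f1 AW_finite[OF fin] apply auto[2]
    unfolding AW_def by blast
  also have "\<dots> = (\<Sum>y\<in>{y. E x y} - {u}. 1 / real (degree E x) * sum (walk_weight E) (AW E u y n))"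
    apply (rule sum.cong, simp)
    apply (simp add: sum_distrib_left)
    apply (rule sum.cong, simp)
    apply (subst walk_weight_Cons, auto simp: AW_def)
    done
  also have "\<dots> = (\<Sum>y\<in>{y. E x y} - {u}. sum (walk_weight E) (AW E u y n)) / real (degree E x)"
    by (simp add: sum_divide_distrib)
  finally show ?thesis .
qed

lemma AW_lower:
  assumes fin: "\<And>x. finite {y. E x y}"
    and g1: "\<And>x. g x \<le> 1"
    and gsub: "\<And>x. g x \<le> 0 \<or> g x \<le> (\<Sum>y\<in>{y. E x y} - {u}. g y) / real (degree E x)"
  shows "g x \<le> sum (walk_weight E) (AW E u x n)"
proof (induction n arbitrary: x)
  case 0
  then show ?case using g1[of x] by (simp add: AW_0 walk_weight_def)
next
  case (Suc n)
  show ?case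
  proof (cases "g x \<le> 0")
    case True
    then show ?thesis using sum_nonneg[of _ "walk_weight E"] walk_weight_nonneg by (meson order_trans)
  next
    case False
    then have "g x \<le> (\<Sum>y\<in>{y. E x y} - {u}. g y) / real (degree E x)" using gsub by auto
    also have "\<dots> \<le> (\<Sum>y\<in>{y. E x y} - {u}. sum (walk_weight E) (AW E u y n)) / real (degree E x)"
      by (rule divide_right_mono) (auto intro: sum_mono Suc.IH)
    finally show ?thesis by (simp add: AW_sum_Suc[OF fin])
  qed
qed

lemma escape_lower:
  assumes fin: "\<And>x. finite {y. E x y}"
    and g1: "\<And>x. g x \<le> 1"
    and gsub: "\<And>x. g x \<le> 0 \<or> g x \<le> (\<Sum>y\<in>{y. E x y} - {u}. g y) / real (degree E x)"
  shows "g u \<le> escape_prob E u"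
  unfolding escape_prob_def prob_no_return_by_def
proof (rule cINF_greatest)
  fix n
  have "avoiding_walks E u n = AW E u u n" unfolding avoiding_walks_def AW_def by simp
  then show "g u \<le> sum (walk_weight E) (avoiding_walks E u n)"
    using AW_lower[OF fin g1 gsub] by simp
qed simp



definition nocyc :: "('a \<Rightarrow> 'a \<Rightarrow> bool) \<Rightarrow> bool" where
  "nocyc E \<longleftrightarrow> \<not> (\<exists>xs. 3 \<le> length xs \<and> distinct xs \<and>
      (\<forall>i. Suc i < length xs \<longrightarrow> E (xs ! i) (xs ! Suc i)) \<and> E (last xs) (hd xs))"

lemma nocyc_mono:
  assumes "nocyc E" "\<And>x y. F x y \<Longrightarrow> E x y"
  shows "nocyc F"
  using assms unfolding nocyc_def by blast

lemma path_exists: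
  assumes "R\<^sup>*\<^sup>* a b"
  shows "\<exists>xs. xs \<noteq> [] \<and> hd xs = a \<and> last xs = b \<and> distinct xs \<and>
           (\<forall>i. Suc i < length xs \<longrightarrow> R (xs ! i) (xs ! Suc i))"
  using assms
proof (induction rule: rtranclp_induct)
  case base
  then show ?case by (intro exI[of _ "[a]"]) auto
next
  case (step b c)
  then obtain xs where xs: "xs \<noteq> []" "hd xs = a" "last xs = b" "distinct xs"
     "\<forall>i. Suc i < length xs \<longrightarrow> R (xs ! i) (xs ! Suc i)" by blast
  show ?case
  proof (cases "c \<in> set xs")
    case True
    then obtain k where k: "k < length xs" "xs ! k = c" by (meson in_set_conv_nth)
    let ?ys = "take (Suc k) xs"
    have "?ys \<noteq> []" using xs by simp
    moreover have "hd ?ys = a" using xs by (simp add: hd_take)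
    moreover have "last ?ys = c" using k by (simp add: take_Suc_conv_app_nth)
    moreover have "distinct ?ys" using xs by simp
    moreover have "\<forall>i. Suc i < length ?ys \<longrightarrow> R (?ys ! i) (?ys ! Suc i)" using xs k by auto
    ultimately show ?thesis by blast
  next
    case False
    let ?ys = "xs @ [c]"
    have "\<forall>i. Suc i < length ?ys \<longrightarrow> R (?ys ! i) (?ys ! Suc i)"
    proof (intro allI impI)
      fix i assume i: "Suc i < length ?ys"
      show "R (?ys ! i) (?ys ! Suc i)"
      proof (cases "Suc i < length xs")
        case True then show ?thesis using xs by (simp add: nth_append)
      next
        case False
        then have "i = length xs - 1" using i by simp
        then have "?ys ! i = b" "?ys ! Suc i = c" using xs
          by (auto simp: nth_append last_conv_nth)
        then show ?thesis using step by simp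
      qed
    qed
    then show ?thesis using xs False by (intro exI[of _ ?ys]) auto
  qed
qed

lemma cycle_contra:
  assumes nc: "nocyc E" and sym: "\<And>a b. E a b \<Longrightarrow> E b a"
    and xy: "E x y" and xz: "E x z" and yz: "y \<noteq> z"
    and conn: "(\<lambda>a b. E a b \<and> a \<noteq> x \<and> b \<noteq> x)\<^sup>*\<^sup>* y z"
  shows False
proof -
  obtain xs where xs: "xs \<noteq> []" "hd xs = y" "last xs = z" "distinct xs"
     and st: "\<forall>i. Suc i < length xs \<longrightarrow> E (xs ! i) (xs ! Suc i) \<and> xs ! i \<noteq> x \<and> xs ! Suc i \<noteq> x"
    using path_exists[OF conn] by blast
  have len: "2 \<le> length xs"
  proof (rule ccontr)
    assume "\<not> 2 \<le> length xs"
    then have "length xs = 1" using xs by (cases xs) (auto simp: not_le)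
    then have "hd xs = last xs" by (cases xs) auto
    then show False using xs yz by simp
  qed
  have notin: "x \<notin> set xs"
  proof
    assume "x \<in> set xs"
    then obtain k where k: "k < length xs" "xs ! k = x" by (meson in_set_conv_nth)
    show False
    proof (cases "Suc k < length xs")
      case True then show False using st k by blast
    next
      case False
      then have "k = Suc (k - 1)" "Suc (k - 1) < length xs" using k len by auto
      then show False using st k by metis
    qed
  qed
  let ?c = "x # xs"
  have "3 \<le> length ?c" using len by simp
  moreover have "distinct ?c" using notin xs by simp
  moreover have "\<forall>i. Suc i < length ?c \<longrightarrow> E (?c ! i) (?c ! Suc i)"
  proof (intro allI impI)
    fix i assume i: "Suc i < length ?c"
    show "E (?c ! i) (?c ! Suc i)"
    proof (cases i)
      case 0 then show ?thesis using xy xs by (simp add: hd_conv_nth)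
    next
      case (Suc j) then show ?thesis using st i by simp
    qed
  qed
  moreover have "E (last ?c) (hd ?c)" using xs sym[OF xz] by simp
  ultimately show False using nc unfolding nocyc_def by blast
qed

lemma rtranclp_sym:
  assumes "\<And>a b. R a b \<Longrightarrow> R b a" "R\<^sup>*\<^sup>* x y"
  shows "R\<^sup>*\<^sup>* y x"
  using assms(2)
proof (induction rule: rtranclp_induct)
  case base then show ?case by simp
next
  case (step b c)
  then show ?case using assms(1) by (meson converse_rtranclp_into_rtranclp)
qed



locale subdiv =
  fixes M :: real and VT :: "'a set" and ET :: "'a \<Rightarrow> 'a \<Rightarrow> bool"
    and VS :: "'b set" and ES :: "'b \<Rightarrow> 'b \<Rightarrow> bool"
    and \<phi> :: "'b \<Rightarrow> 'a" and p :: "'b \<Rightarrow> 'b \<Rightarrow> 'a list" and u v :: 'a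
  assumes treeT: "is_tree VT ET" and lf: "locally_finite VT ET"
    and treeS: "is_tree VS ES" and md: "min_degree_ge3 VS ES"
    and inj: "inj_on \<phi> VS" and phiV: "\<phi> ` VS \<subseteq> VT"
    and paths: "\<And>a b. ES a b \<Longrightarrow>
         2 \<le> length (p a b) \<and> real (length (p a b) - 1) \<le> M \<and>
         hd (p a b) = \<phi> a \<and> last (p a b) = \<phi> b \<and> distinct (p a b) \<and>
         p b a = rev (p a b) \<and> set (p a b) \<subseteq> VT \<and>
         (\<forall>i. Suc i < length (p a b) \<longrightarrow> ET (p a b ! i) (p a b ! Suc i)) \<and>
         set (p a b) \<inter> \<phi> ` VS = {\<phi> a, \<phi> b}"
    and disj: "\<And>a b c d. ES a b \<Longrightarrow> ES c d \<Longrightarrow> {a, b} \<noteq> {c, d} \<Longrightarrow>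
         set (p a b) \<inter> set (p c d) \<subseteq> \<phi> ` VS"
    and VTeq: "VT = \<phi> ` VS \<union> \<Union> {set (p a b) | a b. ES a b}"
    and ETeq: "\<And>x y. ET x y \<longleftrightarrow>
         (\<exists>a b i. ES a b \<and> Suc i < length (p a b) \<and> x = p a b ! i \<and> y = p a b ! Suc i)"
    and uv: "ET u v"
begin

lemma ET_props: "ET x y \<Longrightarrow> x \<in> VT \<and> y \<in> VT \<and> ET y x \<and> x \<noteq> y"
  using treeT unfolding is_tree_def graph_def by blast

lemma ES_props: "ES x y \<Longrightarrow> x \<in> VS \<and> y \<in> VS \<and> ES y x \<and> x \<noteq> y"
  using treeS unfolding is_tree_def graph_def by blast

lemma nocycT: "nocyc ET"
  unfolding nocyc_def
proof
  assume "\<exists>xs. 3 \<le> length xs \<and> distinct xs \<and>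
      (\<forall>i. Suc i < length xs \<longrightarrow> ET (xs ! i) (xs ! Suc i)) \<and> ET (last xs) (hd xs)"
  then obtain xs where xs: "3 \<le> length xs" "distinct xs"
      "\<forall>i. Suc i < length xs \<longrightarrow> ET (xs ! i) (xs ! Suc i)" "ET (last xs) (hd xs)" by blast
  have "set xs \<subseteq> VT"
  proof
    fix x assume "x \<in> set xs"
    then obtain k where k: "k < length xs" "xs ! k = x" by (meson in_set_conv_nth)
    show "x \<in> VT"
    proof (cases "Suc k < length xs")
      case True then show ?thesis using xs(3) k ET_props by blast
    next
      case False
      then have "k = length xs - 1" using k by simp
      then have "xs ! k = last xs" using k by (metis last_conv_nth list.size(3) not_less0)
      then show ?thesis using xs(4) k ET_props by auto
    qed
  qed
  then have "has_cycle VT ET" unfolding has_cycle_def using xs by blast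
  then show False using treeT unfolding is_tree_def by blast
qed

lemma u_VT: "u \<in> VT" and u_ne_v: "u \<noteq> v"
  using ET_props[OF uv] by auto

lemma p_len: "ES a b \<Longrightarrow> 2 \<le> length (p a b)" using paths by blast
lemma p_M: "ES a b \<Longrightarrow> real (length (p a b) - 1) \<le> M" using paths by blast
lemma p_dist: "ES a b \<Longrightarrow> distinct (p a b)" using paths by blast
lemma p_rev: "ES a b \<Longrightarrow> p b a = rev (p a b)" using paths by blast
lemma p_edge: "ES a b \<Longrightarrow> Suc i < length (p a b) \<Longrightarrow> ET (p a b ! i) (p a b ! Suc i)" using paths by blast
lemma p_phi: "ES a b \<Longrightarrow> set (p a b) \<inter> \<phi> ` VS = {\<phi> a, \<phi> b}" using paths by blast
lemma p_0: "ES a b \<Longrightarrow> p a b ! 0 = \<phi> a"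
  using paths[of a b] by (metis hd_conv_nth list.size(3) not_numeral_le_zero)
lemma p_last: "ES a b \<Longrightarrow> p a b ! (length (p a b) - 1) = \<phi> b"
  using paths[of a b] by (metis last_conv_nth list.size(3) not_numeral_le_zero)

lemma p_inj: "ES a b \<Longrightarrow> i < length (p a b) \<Longrightarrow> j < length (p a b) \<Longrightarrow> p a b ! i = p a b ! j \<Longrightarrow> i = j"
  using p_dist nth_eq_iff_index_eq by metis

lemma M_ge1: "1 \<le> M"
proof -
  obtain a b i where "ES a b" using uv ETeq by blast
  then show ?thesis using p_len[of a b] p_M[of a b] by linarith
qed

lemma internal_notphi:
  assumes ab: "ES a b" and i: "0 < i" "Suc i < length (p a b)"
  shows "p a b ! i \<notin> \<phi> ` VS"
proof
  assume h: "p a b ! i \<in> \<phi> ` VS"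
  have "p a b ! i \<in> set (p a b)" using i by simp
  then have "p a b ! i \<in> {\<phi> a, \<phi> b}" using h p_phi[OF ab] by blast
  then have "p a b ! i = p a b ! 0 \<or> p a b ! i = p a b ! (length (p a b) - 1)"
    using p_0[OF ab] p_last[OF ab] by auto
  then show False
  proof
    assume "p a b ! i = p a b ! 0"
    then have "i = 0" by (rule p_inj[OF ab, rotated 2]) (use i in auto)
    then show False using i by simp
  next
    assume "p a b ! i = p a b ! (length (p a b) - 1)"
    then have "i = length (p a b) - 1" by (rule p_inj[OF ab, rotated 2]) (use i in auto)
    then show False using i by simp
  qed
qed

lemma same_path:
  assumes ab: "ES a b" and cd: "ES c d" and x1: "x \<in> set (p a b)" and x2: "x \<in> set (p c d)"
    and nx: "x \<notin> \<phi> ` VS"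
  shows "p c d = p a b \<or> p c d = rev (p a b)"
proof -
  have "{a, b} = {c, d}" using disj[OF ab cd] x1 x2 nx by blast
  then have "(c = a \<and> d = b) \<or> (c = b \<and> d = a)" by (auto simp: doubleton_eq_iff)
  then show ?thesis using p_rev[OF ab] by auto
qed

lemma internal_nbrs:
  assumes ab: "ES a b" and i: "0 < i" "Suc i < length (p a b)"
  shows "{y. ET (p a b ! i) y} = {p a b ! (i - 1), p a b ! Suc i}"
proof (intro set_eqI iffI)
  fix y assume "y \<in> {y. ET (p a b ! i) y}"
  then obtain c d k where cd: "ES c d" "Suc k < length (p c d)" "p a b ! i = p c d ! k" "y = p c d ! Suc k"
    using ETeq by auto
  let ?q = "p a b"
  have nx: "?q ! i \<notin> \<phi> ` VS" using internal_notphi[OF ab i] .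
  have "?q ! i \<in> set (p c d)" using cd by (metis Suc_lessD nth_mem)
  then have "p c d = ?q \<or> p c d = rev ?q" using same_path[OF ab cd(1) _ _ nx] i by simp
  then show "y \<in> {?q ! (i - 1), ?q ! Suc i}"
  proof
    assume e: "p c d = ?q"
    then have "k = i" using cd i p_inj[OF ab, of k i] by simp
    then show ?thesis using cd e by simp
  next
    assume e: "p c d = rev ?q"
    then have "?q ! i = ?q ! (length ?q - Suc k)" using cd by (simp add: rev_nth)
    then have "i = length ?q - Suc k" using cd e i p_inj[OF ab, of i "length ?q - Suc k"] by simp
    then have "y = ?q ! (i - 1)" using cd e by (simp add: rev_nth Suc_diff_Suc)
    then show ?thesis by simp
  qed
next
  fix y assume "y \<in> {p a b ! (i - 1), p a b ! Suc i}"
  then show "y \<in> {y. ET (p a b ! i) y}"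
    using p_edge[OF ab, of "i - 1"] p_edge[OF ab, of i] i ET_props by auto
qed

lemma classify:
  assumes "x \<in> VT"
  shows "x \<in> \<phi> ` VS \<or> (\<exists>a b i. ES a b \<and> 0 < i \<and> Suc i < length (p a b) \<and> x = p a b ! i)"
proof (cases "x \<in> \<phi> ` VS")
  case False
  then obtain a b where ab: "ES a b" "x \<in> set (p a b)" using assms VTeq by blast
  then obtain i where i: "i < length (p a b)" "x = p a b ! i" by (metis in_set_conv_nth)
  have "i \<noteq> 0" using False p_0[OF ab(1)] i ES_props[OF ab(1)] by auto
  moreover have "i \<noteq> length (p a b) - 1" using False p_last[OF ab(1)] i ES_props[OF ab(1)] by auto
  ultimately show ?thesis using ab i by (intro disjI2 exI[of _ a] exI[of _ b] exI[of _ i]) auto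
qed simp

lemma nbr_finite: "x \<in> VT \<Longrightarrow> finite {y. ET x y}"
  using lf unfolding locally_finite_def by blast



lemma deg_ge3:
  assumes "a \<in> VS" shows "3 \<le> card {y. ET (\<phi> a) y}"
proof -
  let ?f = "\<lambda>b. p a b ! 1"
  have fin: "finite {y. ET (\<phi> a) y}" using nbr_finite phiV assms by blast
  have sub: "?f ` {b. ES a b} \<subseteq> {y. ET (\<phi> a) y}"
  proof
    fix y assume "y \<in> ?f ` {b. ES a b}"
    then obtain b where b: "ES a b" "y = p a b ! 1" by blast
    then show "y \<in> {y. ET (\<phi> a) y}" using p_edge[OF b(1), of 0] p_len[OF b(1)] p_0[OF b(1)] by simp
  qed
  have injf: "inj_on ?f {b. ES a b}"
  proof (rule inj_onI)
    fix b c assume b: "b \<in> {b. ES a b}" and c: "c \<in> {b. ES a b}" and e: "p a b ! 1 = p a c ! 1"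
    show "b = c"
    proof (rule ccontr)
      assume bc: "b \<noteq> c"
      have bb: "ES a b" and cc: "ES a c" using b c by auto
      have "{a, b} \<noteq> {a, c}" using bc ES_props[OF bb] by (auto simp: doubleton_eq_iff)
      moreover have "p a b ! 1 \<in> set (p a b)" "p a b ! 1 \<in> set (p a c)"
        using p_len[OF bb] p_len[OF cc] e by (auto, metis One_nat_def Suc_1 Suc_le_lessD nth_mem)
      ultimately have inphi: "p a b ! 1 \<in> \<phi> ` VS" using disj[OF bb cc] by blast
      have "p a b ! 1 \<noteq> \<phi> a"
      proof
        assume "p a b ! 1 = \<phi> a"
        then have "p a b ! 1 = p a b ! 0" using p_0[OF bb] by simp
        then have "(1::nat) = 0" by (rule p_inj[OF bb, rotated 2]) (use p_len[OF bb] in auto)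
        then show False by simp
      qed
      then have 1: "p a b ! 1 = \<phi> b" using inphi p_phi[OF bb] p_len[OF bb] by (metis Int_iff One_nat_def Suc_1 Suc_le_lessD insertE nth_mem singletonD)
      have "p a c ! 1 \<noteq> \<phi> a"
      proof
        assume "p a c ! 1 = \<phi> a"
        then have "p a c ! 1 = p a c ! 0" using p_0[OF cc] by simp
        then have "(1::nat) = 0" by (rule p_inj[OF cc, rotated 2]) (use p_len[OF cc] in auto)
        then show False by simp
      qed
      then have 2: "p a c ! 1 = \<phi> c" using inphi e p_phi[OF cc] p_len[OF cc] by (metis Int_iff One_nat_def Suc_1 Suc_le_lessD insertE nth_mem singletonD)
      have "\<phi> b = \<phi> c" using 1 2 e by simp
      then show False using inj bc ES_props[OF bb] ES_props[OF cc] by (meson inj_on_contraD)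
    qed
  qed
  have "finite {b. ES a b}"
  proof (rule ccontr)
    assume "infinite {b. ES a b}"
    then have "infinite (?f ` {b. ES a b})" using injf finite_imageD by blast
    then show False using fin sub finite_subset by blast
  qed
  then have "3 \<le> card {b. ES a b}" using md assms unfolding min_degree_ge3_def by blast
  also have "\<dots> = card (?f ` {b. ES a b})" using injf by (simp add: card_image)
  also have "\<dots> \<le> card {y. ET (\<phi> a) y}" using card_mono[OF fin sub] .
  finally show ?thesis .
qed

lemma deg_ge2:
  assumes "x \<in> VT" shows "2 \<le> card {y. ET x y}"
  using classify[OF assms]
proof
  assume "\<exists>a b i. ES a b \<and> 0 < i \<and> Suc i < length (p a b) \<and> x = p a b ! i"
  then obtain a b i where ab: "ES a b" "0 < i" "Suc i < length (p a b)" "x = p a b ! i" by blast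
  have "p a b ! (i - 1) \<noteq> p a b ! Suc i"
  proof
    assume "p a b ! (i - 1) = p a b ! Suc i"
    then have "i - 1 = Suc i" by (rule p_inj[OF ab(1), rotated 2]) (use ab in auto)
    then show False by simp
  qed
  then show ?thesis using internal_nbrs[OF ab(1-3)] ab(4) by simp
next
  assume "x \<in> \<phi> ` VS"
  then show ?thesis using deg_ge3 by fastforce
qed

lemma orient:
  assumes ab: "ES a b" and i: "0 < i" "Suc i < length (p a b)" and w: "ET (p a b ! i) w"
  shows "\<exists>c d j. ES c d \<and> 0 < j \<and> Suc j < length (p c d) \<and> p a b ! i = p c d ! j \<and> w = p c d ! (j - 1)"
proof -
  have "w = p a b ! (i - 1) \<or> w = p a b ! Suc i" using internal_nbrs[OF ab i] w by auto
  then show ?thesis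
  proof
    assume "w = p a b ! (i - 1)" then show ?thesis using ab i by blast
  next
    assume w: "w = p a b ! Suc i"
    let ?j = "length (p a b) - Suc i"
    have ba: "ES b a" using ES_props[OF ab] by blast
    have "0 < ?j" "Suc ?j < length (p b a)" using i p_rev[OF ab] by auto
    moreover have "p a b ! i = p b a ! ?j" using i p_rev[OF ab] by (simp add: rev_nth)
    moreover have "w = p b a ! (?j - 1)" using i p_rev[OF ab] w by (simp add: rev_nth Suc_diff_Suc)
    ultimately show ?thesis using ba by blast
  qed
qed

end


context subdiv begin

abbreviation "B \<equiv> branch_edges VT ET u v"
abbreviation "BV \<equiv> branch_vertices VT ET u v"

lemma B_ET: "B x y \<Longrightarrow> ET x y" unfolding branch_edges_def by simp
lemma B_BV: "B x y \<Longrightarrow> x \<in> BV \<and> y \<in> BV" unfolding branch_edges_def by simp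
lemma B_sym: "B x y \<Longrightarrow> B y x" unfolding branch_edges_def using ET_props by blast
lemma B_irr: "B x y \<Longrightarrow> x \<noteq> y" using B_ET ET_props by blast
lemma nocycB: "nocyc B" using nocyc_mono[OF nocycT] B_ET by blast

lemma u_BV: "u \<in> BV" unfolding branch_vertices_def using u_VT u_ne_v by simp
lemma BV_VT: "x \<in> BV \<Longrightarrow> x \<in> VT \<and> x \<noteq> v" unfolding branch_vertices_def by simp

lemma BV_reach: assumes "x \<in> BV" shows "B\<^sup>*\<^sup>* u x"
proof -
  have "(\<lambda>x y. ET x y \<and> x \<noteq> v \<and> y \<noteq> v)\<^sup>*\<^sup>* u x" using assms unfolding branch_vertices_def by simp
  then show ?thesis
  proof (induction rule: rtranclp_induct)
    case base then show ?case by simp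
  next
    case (step a b)
    have r2: "(\<lambda>x y. ET x y \<and> x \<noteq> v \<and> y \<noteq> v)\<^sup>*\<^sup>* u b"
      using step(1,2) by (rule rtranclp.rtrancl_into_rtrancl)
    have "a \<in> BV" "b \<in> BV" unfolding branch_vertices_def
      using step(1,2) r2 ET_props[of a b] by auto
    then have "B a b" unfolding branch_edges_def using step by simp
    then show ?case using step by (meson rtranclp.rtrancl_into_rtrancl)
  qed
qed

lemma nbrB: assumes x: "x \<in> BV" "x \<noteq> u" shows "{y. B x y} = {y. ET x y}"
proof (intro set_eqI iffI)
  fix y assume "y \<in> {y. B x y}" then show "y \<in> {y. ET x y}" using B_ET by simp
next
  fix y assume y: "y \<in> {y. ET x y}"
  have conn: "(\<lambda>a b. ET a b \<and> a \<noteq> v \<and> b \<noteq> v)\<^sup>*\<^sup>* u x" using x unfolding branch_vertices_def by simp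
  have yv: "y \<noteq> v"
  proof
    assume "y = v"
    then have "ET v x" using y ET_props by auto
    moreover have "ET v u" using uv ET_props by auto
    moreover have "\<And>a b. ET a b \<Longrightarrow> ET b a" using ET_props by blast
    ultimately show False using cycle_contra[OF nocycT _ _ _ _ conn] x(2) by blast
  qed
  have "y \<in> BV" unfolding branch_vertices_def
    using y yv conn ET_props[of x y] BV_VT[OF x(1)] by (auto intro: rtranclp.rtrancl_into_rtrancl)
  then show "y \<in> {y. B x y}" unfolding branch_edges_def using x y by simp
qed

lemma nbrBu: "{y. B u y} = {y. ET u y} - {v}"
proof (intro set_eqI iffI)
  fix y assume "y \<in> {y. B u y}" then show "y \<in> {y. ET u y} - {v}"
    using B_ET B_BV BV_VT by blast
next
  fix y assume y: "y \<in> {y. ET u y} - {v}"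
  have "y \<in> BV" unfolding branch_vertices_def
    using y u_ne_v ET_props[of u y] by (auto intro: r_into_rtranclp)
  then show "y \<in> {y. B u y}" unfolding branch_edges_def using y u_BV by simp
qed

lemma finB: "finite {y. B x y}"
proof (cases "x \<in> BV")
  case True
  have "{y. B x y} \<subseteq> {y. ET x y}" using B_ET by blast
  then show ?thesis using nbr_finite[of x] BV_VT[OF True] finite_subset by blast
next
  case False
  then have "{y. B x y} = {}" using B_BV by blast
  then show ?thesis by simp
qed

definition d :: "'a \<Rightarrow> nat" where "d x = (LEAST n. (B ^^ n) u x)"

lemma d_reach: assumes "x \<in> BV" shows "(B ^^ d x) u x"
proof -
  obtain n where "(B ^^ n) u x" using BV_reach[OF assms] rtranclp_power by metis
  then show ?thesis unfolding d_def by (rule LeastI)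
qed

lemma d_le: "(B ^^ n) u x \<Longrightarrow> d x \<le> n" unfolding d_def by (rule Least_le)

lemma d_u: "d u = 0" using d_le[of 0 u] by simp

lemma d_edge: "x \<in> BV \<Longrightarrow> B x y \<Longrightarrow> d y \<le> Suc (d x)"
  by (rule d_le[OF relpowp_Suc_I[OF d_reach]])

lemma d_zero: "x \<in> BV \<Longrightarrow> d x = 0 \<Longrightarrow> x = u"
  using d_reach[of x] by simp

lemma d_par_ex:
  assumes x: "x \<in> BV" "x \<noteq> u" shows "\<exists>q. B q x \<and> Suc (d q) = d x"
proof -
  obtain k where k: "d x = Suc k" using d_zero x by (cases "d x") auto
  then obtain q where q: "(B ^^ k) u q" "B q x" using d_reach[OF x(1)] relpowp_Suc_E by metis
  have "d q \<le> k" using d_le[OF q(1)] .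
  moreover have "d x \<le> Suc (d q)" using d_edge[OF _ q(2)] B_BV[OF q(2)] by blast
  ultimately show ?thesis using q k by (intro exI[of _ q]) auto
qed

lemma restr:
  assumes "(B ^^ k) u w" "k \<le> d x" "w \<noteq> x"
  shows "(\<lambda>a b. B a b \<and> a \<noteq> x \<and> b \<noteq> x)\<^sup>*\<^sup>* u w"
  using assms
proof (induction k arbitrary: w)
  case 0 then show ?case by (auto elim: relpowp_0_E)
next
  case (Suc k)
  from Suc.prems(1) obtain q where q: "(B ^^ k) u q" "B q w" by (rule relpowp_Suc_E)
  have "q \<noteq> x"
  proof
    assume "q = x"
    then have "d x \<le> k" using d_le[OF q(1)] by simp
    then show False using Suc.prems(2) by simp
  qed
  have "(\<lambda>a b. B a b \<and> a \<noteq> x \<and> b \<noteq> x)\<^sup>*\<^sup>* u q"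
    by (rule Suc.IH[OF q(1)]) (use Suc.prems(2) \<open>q \<noteq> x\<close> in auto)
  moreover have "B q w \<and> q \<noteq> x \<and> w \<noteq> x" using q \<open>q \<noteq> x\<close> Suc.prems(3) by simp
  ultimately show ?case by (rule rtranclp.rtrancl_into_rtrancl)
qed

lemma tree_lem:
  assumes x: "x \<in> BV" and yx: "B y x" and zx: "B z x" and dy: "d y \<le> d x" and dz: "d z \<le> d x"
  shows "y = z"
proof (rule ccontr)
  assume yz: "y \<noteq> z"
  let ?R = "\<lambda>a b. B a b \<and> a \<noteq> x \<and> b \<noteq> x"
  have "?R\<^sup>*\<^sup>* u y" using restr[OF d_reach[of y] dy] B_BV[OF yx] B_irr[OF yx] by blast
  moreover have "?R\<^sup>*\<^sup>* u z" using restr[OF d_reach[of z] dz] B_BV[OF zx] B_irr[OF zx] by blast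
  moreover have "\<And>a b. ?R a b \<Longrightarrow> ?R b a" using B_sym by blast
  ultimately have "?R\<^sup>*\<^sup>* y z"
    using rtranclp_sym[of ?R u y] rtranclp_trans[of ?R y u z] by blast
  then show False using cycle_contra[OF nocycB _ B_sym[OF yx] B_sym[OF zx] yz] B_sym by blast
qed

definition par :: "'a \<Rightarrow> 'a" where "par x = (SOME q. B q x \<and> Suc (d q) = d x)"

lemma par_props:
  assumes "x \<in> BV" "x \<noteq> u"
  shows "B (par x) x" "Suc (d (par x)) = d x" "par x \<in> BV"
proof -
  have "B (par x) x \<and> Suc (d (par x)) = d x"
    unfolding par_def using someI_ex[OF d_par_ex[OF assms]] .
  then show "B (par x) x" "Suc (d (par x)) = d x" "par x \<in> BV" using B_BV by auto
qed

lemma child: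
  assumes x: "x \<in> BV" and xy: "B x y" and np: "x \<noteq> u \<Longrightarrow> y \<noteq> par x"
  shows "y \<noteq> u" "d y = Suc (d x)" "par y = x" "y \<in> BV"
proof -
  have yB: "y \<in> BV" using B_BV[OF xy] by simp
  have dy: "d y = Suc (d x)"
  proof (rule ccontr)
    assume "d y \<noteq> Suc (d x)"
    then have le: "d y \<le> d x" using d_edge[OF x xy] by simp
    show False
    proof (cases "x = u")
      case True
      then have "y = u" using le d_u d_zero[OF yB] by simp
      then show False using B_irr[OF xy] True by simp
    next
      case False
      have "d (par x) \<le> d x" using par_props(2)[OF x False] by simp
      then have "par x = y" by (rule tree_lem[OF x par_props(1)[OF x False] B_sym[OF xy] _ le])
      then show False using np False by simp
    qed
  qed
  then show "d y = Suc (d x)" .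
  show yu: "y \<noteq> u" using dy d_u by auto
  have "d (par y) \<le> d y" using par_props(2)[OF yB yu] by simp
  moreover have "d x \<le> d y" using dy by simp
  ultimately show "par y = x" by (rule tree_lem[OF yB par_props(1)[OF yB yu] xy])
  show "y \<in> BV" using yB .
qed

end


primrec pot :: "('a \<Rightarrow> 'a) \<Rightarrow> ('a \<Rightarrow> bool) \<Rightarrow> real \<Rightarrow> nat \<Rightarrow> 'a \<Rightarrow> real \<times> real \<times> nat" where
  "pot pr br s0 0 x = (0, s0, 0)"
| "pot pr br s0 (Suc n) x = (let t = pot pr br s0 n (pr x) in
     (fst t + fst (snd t), if br x then fst (snd t) / 2 else fst (snd t),
      if br x then 0 else Suc (snd (snd t))))"

context subdiv begin

definition s0 :: real where "s0 = 1 / (2 * M)"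
definition br :: "'a \<Rightarrow> bool" where "br x \<longleftrightarrow> x \<in> \<phi> ` VS"
definition G :: "'a \<Rightarrow> real" where "G x = fst (pot par br s0 (d x) x)"
definition S :: "'a \<Rightarrow> real" where "S x = fst (snd (pot par br s0 (d x) x))"
definition R :: "'a \<Rightarrow> nat" where "R x = snd (snd (pot par br s0 (d x) x))"

lemma M_pos: "0 < M" using M_ge1 by simp
lemma s0_pos: "0 < s0" unfolding s0_def using M_pos by simp
lemma s0_M: "2 * M * s0 = 1" unfolding s0_def using M_pos by simp

lemma trip_u: "G u = 0" "S u = s0" "R u = 0"
  unfolding G_def S_def R_def d_u by simp_all

lemma trip_step:
  assumes "x \<in> BV" "x \<noteq> u"
  shows "G x = G (par x) + S (par x)"
    "S x = (if br x then S (par x) / 2 else S (par x))"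
    "R x = (if br x then 0 else Suc (R (par x)))"
proof -
  have e: "d x = Suc (d (par x))" using par_props(2)[OF assms] by simp
  show "G x = G (par x) + S (par x)" unfolding G_def S_def e by (simp add: Let_def)
  show "S x = (if br x then S (par x) / 2 else S (par x))" unfolding S_def e by (simp add: Let_def)
  show "R x = (if br x then 0 else Suc (R (par x)))" unfolding R_def e by (simp add: Let_def)
qed

definition posP :: "'a \<Rightarrow> bool" where
  "posP x \<longleftrightarrow> (\<exists>a b j. ES a b \<and> 0 < j \<and> Suc j < length (p a b) \<and> x = p a b ! j \<and>
       par x = p a b ! (j - 1) \<and> R x \<le> j)"

definition Inv :: "'a \<Rightarrow> bool" where
  "Inv x \<longleftrightarrow> 0 < S x \<and> G x \<le> 2 * M * s0 - (2 * M - real (R x)) * S x \<and>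
     real (R x) + 1 \<le> M \<and> (\<not> br x \<and> x \<noteq> u \<longrightarrow> posP x)"

lemma R_bound:
  assumes "x = u \<or> br x \<or> posP x" "x \<in> BV"
  shows "real (R x) + 1 \<le> M"
proof -
  consider "x = u" | "br x" "x \<noteq> u" | "posP x" using assms by blast
  then show ?thesis
  proof cases
    case 1 then show ?thesis using trip_u M_ge1 by simp
  next
    case 2 then show ?thesis using trip_step(3)[OF assms(2)] M_ge1 by simp
  next
    case 3
    then obtain a b j where ab: "ES a b" "Suc j < length (p a b)" "R x \<le> j" unfolding posP_def by blast
    have "real (R x) + 1 \<le> real (length (p a b) - 1)" using ab by simp
    then show ?thesis using p_M[OF ab(1)] by linarith
  qed
qed

lemma inv_all: "x \<in> BV \<Longrightarrow> d x = n \<Longrightarrow> Inv x"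
proof (induction n arbitrary: x)
  case 0
  then have "x = u" using d_zero by simp
  then show ?case unfolding Inv_def using trip_u s0_pos M_ge1 by simp
next
  case (Suc n)
  have xu: "x \<noteq> u" using Suc.prems d_u by auto
  let ?w = "par x"
  have wB: "?w \<in> BV" and dw: "d ?w = n" and wx: "B ?w x"
    using par_props[OF Suc.prems(1) xu] Suc.prems by auto
  have IW: "Inv ?w" using Suc.IH[OF wB dw] .
  have Sx: "0 < S x" using IW trip_step(2)[OF Suc.prems(1) xu] unfolding Inv_def by auto
  have Gx: "G x \<le> 2 * M * s0 - (2 * M - real (R x)) * S x"
  proof (cases "br x")
    case True
    have "G x = G ?w + S ?w" using trip_step(1)[OF Suc.prems(1) xu] .
    also have "\<dots> \<le> 2 * M * s0 - (2 * M - real (R ?w)) * S ?w + S ?w" using IW unfolding Inv_def by simp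
    also have "\<dots> \<le> 2 * M * s0 - M * S ?w"
    proof -
      have "real (R ?w) + 1 \<le> M" "0 < S ?w" using IW unfolding Inv_def by auto
      then have "(real (R ?w) + 1) * S ?w \<le> M * S ?w" by (simp add: mult_right_mono)
      then show ?thesis by (simp add: algebra_simps)
    qed
    also have "\<dots> = 2 * M * s0 - (2 * M - real (R x)) * S x"
      using trip_step(2,3)[OF Suc.prems(1) xu] True by simp
    finally show ?thesis .
  next
    case False
    have "G x = G ?w + S ?w" using trip_step(1)[OF Suc.prems(1) xu] .
    also have "\<dots> \<le> 2 * M * s0 - (2 * M - real (R ?w)) * S ?w + S ?w" using IW unfolding Inv_def by simp
    also have "\<dots> = 2 * M * s0 - (2 * M - real (R x)) * S x"
      using trip_step(2,3)[OF Suc.prems(1) xu] False by (simp add: algebra_simps)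
    finally show ?thesis .
  qed
  have Px: "\<not> br x \<Longrightarrow> posP x"
  proof -
    assume nbx: "\<not> br x"
    have Rx: "R x = Suc (R ?w)" using trip_step(3)[OF Suc.prems(1) xu] nbx by simp
    have "x \<in> VT" using BV_VT[OF Suc.prems(1)] by simp
    then obtain a b i where abi: "ES a b" "0 < i" "Suc i < length (p a b)" "x = p a b ! i"
      using classify nbx unfolding br_def by blast
    have "ET (p a b ! i) ?w" using B_ET[OF B_sym[OF wx]] abi(4) by simp
    then obtain c e j where cej: "ES c e" "0 < j" "Suc j < length (p c e)" "p a b ! i = p c e ! j"
        "?w = p c e ! (j - 1)"
      using orient[OF abi(1-3)] by blast
    have xj: "x = p c e ! j" using cej abi by simp
    have "R x \<le> j"
    proof (cases "?w = u \<or> br ?w")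
      case True
      then have "R ?w = 0" using trip_u trip_step(3)[OF wB] by (cases "?w = u") auto
      then show ?thesis using Rx cej by simp
    next
      case False
      then have "posP ?w" using IW unfolding Inv_def by blast
      then obtain a2 b2 j2 where w2: "ES a2 b2" "0 < j2" "Suc j2 < length (p a2 b2)" "?w = p a2 b2 ! j2"
        "par ?w = p a2 b2 ! (j2 - 1)" "R ?w \<le> j2" unfolding posP_def by blast
      have nw: "?w \<notin> \<phi> ` VS" using False unfolding br_def by simp
      have "?w \<in> set (p c e)" using cej by simp
      moreover have "?w \<in> set (p a2 b2)" using w2 by (metis Suc_lessD nth_mem)
      ultimately have "p a2 b2 = p c e \<or> p a2 b2 = rev (p c e)"
        using same_path[OF cej(1) w2(1) _ _ nw] by blast
      then show ?thesis
      proof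
        assume eq: "p a2 b2 = p c e"
        have "p c e ! j2 = p c e ! (j - 1)" using w2(4) cej(5) eq by simp
        then have "j2 = j - 1" by (rule p_inj[OF cej(1), rotated 2]) (use w2 eq cej in auto)
        then show ?thesis using Rx w2(6) cej(2) by simp
      next
        assume eq: "p a2 b2 = rev (p c e)"
        let ?L = "length (p c e)"
        have lenL: "length (p a2 b2) = ?L" using eq by simp
        have "p c e ! (?L - Suc j2) = p c e ! (j - 1)" using w2(3,4) cej(5) eq by (simp add: rev_nth)
        then have jj: "?L - Suc j2 = j - 1" by (rule p_inj[OF cej(1), rotated 2]) (use w2 lenL cej in auto)
        have "par ?w = p c e ! (?L - Suc (j2 - 1))" using w2(3,5) eq by (simp add: rev_nth)
        also have "?L - Suc (j2 - 1) = j" using jj w2(2,3) lenL cej(2,3) by linarith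
        finally have "par ?w = x" using xj by simp
        then have "d ?w = Suc (d x)" using par_props(2)[OF wB] False by auto
        then show ?thesis using dw Suc.prems(2) by simp
      qed
    qed
    then show "posP x" unfolding posP_def using cej xj by blast
  qed
  have "real (R x) + 1 \<le> M" using R_bound[OF _ Suc.prems(1)] Px by blast
  then show ?case unfolding Inv_def using Sx Gx Px xu by blast
qed

lemma Inv: "x \<in> BV \<Longrightarrow> Inv x" using inv_all by blast

end


context subdiv begin

definition g :: "'a \<Rightarrow> real" where
  "g y = (if y \<in> BV then (if y = u then s0 else G y) else 0)"

lemma G_le1: "x \<in> BV \<Longrightarrow> G x \<le> 1"
proof -
  assume x: "x \<in> BV"
  have I: "0 < S x" "G x \<le> 2 * M * s0 - (2 * M - real (R x)) * S x" "real (R x) + 1 \<le> M"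
    using Inv[OF x] unfolding Inv_def by auto
  have "0 \<le> (2 * M - real (R x)) * S x" using I by simp
  then show ?thesis using I(2) s0_M by linarith
qed

lemma s0_le1: "s0 \<le> 1"
proof -
  have "2 * s0 \<le> 2 * M * s0" using M_ge1 s0_pos by (simp add: mult_right_mono)
  then show ?thesis using s0_M by simp
qed

lemma g_le1: "g x \<le> 1"
  unfolding g_def using G_le1 s0_le1 by auto

lemma G_child_u: "B u y \<Longrightarrow> G y = s0"
  using child[OF u_BV, of y] trip_step(1)[of y] trip_u by simp

lemma gsub_u: "g u \<le> (\<Sum>y\<in>{y. B u y} - {u}. g y) / real (degree B u)"
proof -
  let ?N = "{y. B u y}"
  have fin: "finite ?N" using finB .
  have "2 \<le> card {y. ET u y}" using deg_ge2[OF u_VT] .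
  moreover have "{y. ET u y} \<subseteq> {v} \<Longrightarrow> card {y. ET u y} \<le> 1"
    using card_mono[of "{v}" "{y. ET u y}"] by simp
  ultimately have "\<not> {y. ET u y} \<subseteq> {v}" by linarith
  then have ne: "?N \<noteq> {}" using nbrBu by blast
  have uN: "u \<notin> ?N" using B_irr by blast
  have "(\<Sum>y\<in>?N - {u}. g y) = (\<Sum>y\<in>?N. s0)"
    using uN by (intro sum.cong) (auto simp: g_def G_child_u B_irr B_BV)
  also have "\<dots> = real (card ?N) * s0" by simp
  finally have "(\<Sum>y\<in>?N - {u}. g y) / real (degree B u) = s0"
    unfolding degree_def using ne fin by (simp add: card_gt_0_iff)
  then show ?thesis unfolding g_def using u_BV by simp
qed

lemma gsub_x:
  assumes x: "x \<in> BV" "x \<noteq> u"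
  shows "g x \<le> (\<Sum>y\<in>{y. B x y} - {u}. g y) / real (degree B x)"
proof -
  let ?N = "{y. B x y}"
  let ?w = "par x"
  have fin: "finite ?N" using finB .
  have NE: "?N = {y. ET x y}" using nbrB[OF x] .
  have k2: "2 \<le> card ?N" using NE deg_ge2 BV_VT[OF x(1)] by simp
  have k3: "br x \<Longrightarrow> 3 \<le> card ?N" using NE deg_ge3 unfolding br_def by auto
  have wN: "?w \<in> ?N" using B_sym[OF par_props(1)[OF x]] by simp
  have s1: "(\<Sum>y\<in>?N - {u}. g y) = (\<Sum>y\<in>?N - {u}. G y)"
    by (intro sum.cong) (auto simp: g_def B_BV)
  have s2: "(\<Sum>y\<in>?N. G y) = (\<Sum>y\<in>?N - {u}. G y)"
  proof (cases "u \<in> ?N")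
    case True
    then show ?thesis using sum.remove[OF fin True, of G] trip_u by simp
  qed simp
  have s3: "(\<Sum>y\<in>?N. G y) = G ?w + (\<Sum>y\<in>?N - {?w}. G y)" using sum.remove[OF fin wN] .
  have s4: "(\<Sum>y\<in>?N - {?w}. G y) = (\<Sum>y\<in>?N - {?w}. G x + S x)"
  proof (intro sum.cong refl)
    fix y assume y: "y \<in> ?N - {?w}"
    then have "B x y" "y \<noteq> par x" by auto
    then have c: "y \<noteq> u" "par y = x" "y \<in> BV" using child[OF x(1)] by auto
    show "G y = G x + S x" using trip_step(1)[OF c(3,1)] c(2) by simp
  qed
  have cardC: "card (?N - {?w}) = card ?N - 1" using wN fin by simp
  let ?k = "real (card ?N)"
  have Gw: "G ?w = G x - S ?w" using trip_step(1)[OF x] by simp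
  have Sw: "S ?w \<le> (?k - 1) * S x"
  proof (cases "br x")
    case True
    then have "S x = S ?w / 2" using trip_step(2)[OF x] by simp
    moreover have "3 \<le> ?k" using k3[OF True] by simp
    moreover have "0 < S x" using Inv[OF x(1)] unfolding Inv_def by simp
    ultimately show ?thesis
    proof -
      assume a: "S x = S ?w / 2" "3 \<le> ?k" "0 < S x"
      have "2 * S x \<le> (?k - 1) * S x" using a by (intro mult_right_mono) auto
      moreover have "S ?w = 2 * S x" using a(1) by simp
      ultimately show ?thesis by linarith
    qed
  next
    case False
    then have "S x = S ?w" using trip_step(2)[OF x] by simp
    moreover have "2 \<le> ?k" using k2 by simp
    moreover have "0 < S x" using Inv[OF x(1)] unfolding Inv_def by simp
    ultimately show ?thesis using mult_right_mono[of 1 "?k - 1" "S x"] by simp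
  qed
  have sumeq: "(\<Sum>y\<in>?N - {u}. g y) = G x - S ?w + (?k - 1) * (G x + S x)"
    using s1 s2 s3 s4 Gw cardC k2 by (simp add: of_nat_diff)
  have "?k * G x \<le> G x - S ?w + (?k - 1) * (G x + S x)"
    using Sw by (simp add: algebra_simps)
  then have "G x \<le> (G x - S ?w + (?k - 1) * (G x + S x)) / ?k"
    using k2 by (simp add: pos_le_divide_eq mult.commute)
  then show ?thesis unfolding degree_def sumeq using g_def x by simp
qed

lemma gsub: "g x \<le> 0 \<or> g x \<le> (\<Sum>y\<in>{y. B x y} - {u}. g y) / real (degree B x)"
proof (cases "x \<in> BV")
  case True
  then show ?thesis using gsub_u gsub_x by (cases "x = u") auto
next
  case False then show ?thesis unfolding g_def by simp
qed

lemma final: "1 / (2 * M) \<le> escape_prob B u"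
proof -
  have "g u \<le> escape_prob B u" by (rule escape_lower[OF finB g_le1 gsub])
  then show ?thesis unfolding g_def s0_def using u_BV by simp
qed

end


lemma subdiv_final:
  fixes VT :: "'a set" and VS :: "'b set"
  assumes "is_tree VT ET" "locally_finite VT ET" "is_tree VS ES" "min_degree_ge3 VS ES"
    "bounded_subdivision M VT ET VS ES" "ET u v"
  shows "1 / (2 * M) \<le> escape_prob (branch_edges VT ET u v) u"
proof -
  have "\<exists>(\<phi>::'b \<Rightarrow> 'a) (p::'b \<Rightarrow> 'b \<Rightarrow> 'a list). inj_on \<phi> VS \<and> \<phi> ` VS \<subseteq> VT \<and>
      (\<forall>a b. ES a b \<longrightarrow>
         2 \<le> length (p a b) \<and> real (length (p a b) - 1) \<le> M \<and>
         hd (p a b) = \<phi> a \<and> last (p a b) = \<phi> b \<and> distinct (p a b) \<and>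
         p b a = rev (p a b) \<and> set (p a b) \<subseteq> VT \<and>
         (\<forall>i. Suc i < length (p a b) \<longrightarrow> ET (p a b ! i) (p a b ! Suc i)) \<and>
         set (p a b) \<inter> \<phi> ` VS = {\<phi> a, \<phi> b}) \<and>
      (\<forall>a b c d. ES a b \<and> ES c d \<and> {a, b} \<noteq> {c, d} \<longrightarrow>
         set (p a b) \<inter> set (p c d) \<subseteq> \<phi> ` VS) \<and>
      VT = \<phi> ` VS \<union> \<Union> {set (p a b) | a b. ES a b} \<and>
      (\<forall>x y. ET x y \<longleftrightarrow>
         (\<exists>a b i. ES a b \<and> Suc i < length (p a b) \<and> x = p a b ! i \<and> y = p a b ! Suc i))"
    using assms(5) unfolding bounded_subdivision_def .
  then obtain \<phi> :: "'b \<Rightarrow> 'a" and p where H: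
      "inj_on \<phi> VS \<and> \<phi> ` VS \<subseteq> VT \<and>
      (\<forall>a b. ES a b \<longrightarrow>
         2 \<le> length (p a b) \<and> real (length (p a b) - 1) \<le> M \<and>
         hd (p a b) = \<phi> a \<and> last (p a b) = \<phi> b \<and> distinct (p a b) \<and>
         p b a = rev (p a b) \<and> set (p a b) \<subseteq> VT \<and>
         (\<forall>i. Suc i < length (p a b) \<longrightarrow> ET (p a b ! i) (p a b ! Suc i)) \<and>
         set (p a b) \<inter> \<phi> ` VS = {\<phi> a, \<phi> b}) \<and>
      (\<forall>a b c d. ES a b \<and> ES c d \<and> {a, b} \<noteq> {c, d} \<longrightarrow>
         set (p a b) \<inter> set (p c d) \<subseteq> \<phi> ` VS) \<and>
      VT = \<phi> ` VS \<union> \<Union> {set (p a b) | a b. ES a b} \<and>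
      (\<forall>x y. ET x y \<longleftrightarrow>
         (\<exists>a b i. ES a b \<and> Suc i < length (p a b) \<and> x = p a b ! i \<and> y = p a b ! Suc i))"
    by (elim exE)
  have h1: "inj_on \<phi> VS" and h2: "\<phi> ` VS \<subseteq> VT" and h3: "\<forall>a b. ES a b \<longrightarrow>
         2 \<le> length (p a b) \<and> real (length (p a b) - 1) \<le> M \<and>
         hd (p a b) = \<phi> a \<and> last (p a b) = \<phi> b \<and> distinct (p a b) \<and>
         p b a = rev (p a b) \<and> set (p a b) \<subseteq> VT \<and>
         (\<forall>i. Suc i < length (p a b) \<longrightarrow> ET (p a b ! i) (p a b ! Suc i)) \<and>
         set (p a b) \<inter> \<phi> ` VS = {\<phi> a, \<phi> b}"
    and h4: "\<forall>a b c d. ES a b \<and> ES c d \<and> {a, b} \<noteq> {c, d} \<longrightarrow>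
         set (p a b) \<inter> set (p c d) \<subseteq> \<phi> ` VS"
    and h5: "VT = \<phi> ` VS \<union> \<Union> {set (p a b) | a b. ES a b}"
    and h6: "\<forall>x y. ET x y \<longleftrightarrow>
         (\<exists>a b i. ES a b \<and> Suc i < length (p a b) \<and> x = p a b ! i \<and> y = p a b ! Suc i)"
    by (fact conjunct1[OF H] conjunct1[OF conjunct2[OF H]] conjunct1[OF conjunct2[OF conjunct2[OF H]]]
       conjunct1[OF conjunct2[OF conjunct2[OF conjunct2[OF H]]]]
       conjunct1[OF conjunct2[OF conjunct2[OF conjunct2[OF conjunct2[OF H]]]]]
       conjunct2[OF conjunct2[OF conjunct2[OF conjunct2[OF conjunct2[OF H]]]]])+
  have "subdiv M VT ET VS ES \<phi> p u v"
  proof (rule subdiv.intro)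
    show "\<And>a b. ES a b \<Longrightarrow>
         2 \<le> length (p a b) \<and> real (length (p a b) - 1) \<le> M \<and>
         hd (p a b) = \<phi> a \<and> last (p a b) = \<phi> b \<and> distinct (p a b) \<and>
         p b a = rev (p a b) \<and> set (p a b) \<subseteq> VT \<and>
         (\<forall>i. Suc i < length (p a b) \<longrightarrow> ET (p a b ! i) (p a b ! Suc i)) \<and>
         set (p a b) \<inter> \<phi> ` VS = {\<phi> a, \<phi> b}" using h3 by blast
    show "\<And>a b c d. ES a b \<Longrightarrow> ES c d \<Longrightarrow> {a, b} \<noteq> {c, d} \<Longrightarrow>
         set (p a b) \<inter> set (p c d) \<subseteq> \<phi> ` VS" using h4 by blast
    show "\<And>x y. ET x y \<longleftrightarrow>
         (\<exists>a b i. ES a b \<and> Suc i < length (p a b) \<and> x = p a b ! i \<and> y = p a b ! Suc i)"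
      using h6 by blast
  qed (fact assms h1 h2 h5)+
  then show ?thesis by (rule subdiv.final)
qed

theorem mainTheorem9:
  fixes M :: real
  assumes "M > 0"
  shows "\<exists>\<alpha>>0. \<forall>(VT::nat set) ET u v.
    is_tree VT ET \<and> locally_finite VT ET \<and>
    (\<exists>(VS::nat set) ES. is_tree VS ES \<and> min_degree_ge3 VS ES \<and>
        bounded_subdivision M VT ET VS ES) \<and>
    ET u v
    \<longrightarrow> \<alpha> \<le> escape_prob (branch_edges VT ET u v) u"
proof (intro exI[of _ "1 / (2 * M)"] conjI allI impI)
  show "0 < 1 / (2 * M)" using assms by simp
next
  fix VT :: "nat set" and ET u v
  assume h: "is_tree VT ET \<and> locally_finite VT ET \<and>
    (\<exists>(VS::nat set) ES. is_tree VS ES \<and> min_degree_ge3 VS ES \<and>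
        bounded_subdivision M VT ET VS ES) \<and> ET u v"
  then obtain VS :: "nat set" and ES where s: "is_tree VS ES" "min_degree_ge3 VS ES"
     "bounded_subdivision M VT ET VS ES" by blast
  have t: "is_tree VT ET" "locally_finite VT ET" "ET u v" using h by simp_all
  show "1 / (2 * M) \<le> escape_prob (branch_edges VT ET u v) u"
    by (rule subdiv_final[OF t(1,2) s t(3)])
qed


end
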